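(* Let $X=(X_n)_{n\in\mathbb{Z}}$ be a stationary sequence of integer-valued random variables and, for $n\in\mathbb{Z}$, let $\mathbb{Z}^R_X(n)$ be the connected component of $n$ in the record graph of $X$. Then $$\mathbb{P}[\mathbb{Z}^R_X(0)\text{ is finite}]=\mathbb{P}[\mathbb{Z}^R_X(n)\text{ is finite for all } n\ge1]=\mathbb{P}[\mathbb{Z}^R_X(n)\text{ is finite for all }n\le-1].$$
   Context: For a sequence $x=(x_n)_{n\in\mathbb{Z}}$, the record map is $R_x(i)=\inf\{n>i: \sum_{l=i}^{n-1}x_l\ge0\}$ if this set is nonempty, and $R_x(i)=i$ otherwise. The record graph has vertex set $\mathbb{Z}$ and a directed edge $i\to R_x(i)$ whenever $R_x(i)\ne i$; components are in the undirected sense. *)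

theory Defs
  imports "HOL-Probability.Probability"
begin

definition record_map :: "(int \<Rightarrow> int) \<Rightarrow> int \<Rightarrow> int" where
  "record_map x i =
     (if \<exists>n>i. (\<Sum>l\<in>{i..<n}. x l) \<ge> 0
      then (LEAST n. n > i \<and> (\<Sum>l\<in>{i..<n}. x l) \<ge> 0)
      else i)"

definition record_edges :: "(int \<Rightarrow> int) \<Rightarrow> (int \<times> int) set" where
  "record_edges x = {(i, record_map x i) | i. record_map x i \<noteq> i}"

definition record_component :: "(int \<Rightarrow> int) \<Rightarrow> int \<Rightarrow> int set" where
  "record_component x n = {m. (n, m) \<in> (record_edges x \<union> (record_edges x)\<inverse>)\<^sup>*}"

definition stationary_int_process :: "'a measure \<Rightarrow> (int \<Rightarrow> 'a \<Rightarrow> int) \<Rightarrow> bool" where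
  "stationary_int_process M X \<longleftrightarrow>
     (\<forall>n. X n \<in> measurable M (count_space UNIV)) \<and>
     (\<forall>k. distr M (PiM UNIV (\<lambda>_. count_space UNIV)) (\<lambda>\<omega> n. X (n + k) \<omega>)
        = distr M (PiM UNIV (\<lambda>_. count_space UNIV)) (\<lambda>\<omega> n. X n \<omega>))"

end

theory Submission
  imports Defs
begin

lemma rm_char:
  "record_map x i = j \<longleftrightarrow>
    (i < j \<and> 0 \<le> (\<Sum>l\<in>{i..<j}. x l) \<and> (\<forall>n. i < n \<and> n < j \<longrightarrow> (\<Sum>l\<in>{i..<n}. x l) < 0))
    \<or> (j = i \<and> \<not> (\<exists>n>i. 0 \<le> (\<Sum>l\<in>{i..<n}. x l)))"
proof (cases "\<exists>n>i. 0 \<le> (\<Sum>l\<in>{i..<n}. x l)")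
  case True
  define Q where "Q = (\<lambda>n. n > i \<and> 0 \<le> (\<Sum>l\<in>{i..<n}. x l))"
  from True obtain n where "Q n" unfolding Q_def by auto
  then have "\<exists>d::nat. Q (i + 1 + int d)" by (intro exI[of _ "nat (n - i - 1)"]) (auto simp: Q_def)
  then obtain d where d: "Q (i + 1 + int d)" "\<And>e. e < d \<Longrightarrow> \<not> Q (i + 1 + int e)"
    using exists_least_iff[of "\<lambda>d. Q (i + 1 + int d)"] by blast
  define n0 where "n0 = i + 1 + int d"
  have min: "y \<ge> n0" if "Q y" for y
  proof (rule ccontr)
    assume "\<not> y \<ge> n0"
    then have "nat (y - i - 1) < d" using that by (auto simp: n0_def Q_def)
    from d(2)[OF this] that show False by (auto simp: Q_def)
  qed
  have Q0: "Q n0" using d n0_def by simp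
  have rm: "record_map x i = n0"
    unfolding record_map_def using True
    by (simp, intro Least_equality) (use Q0 min in \<open>auto simp: Q_def\<close>)
  show ?thesis
  proof
    assume "record_map x i = j"
    then have "j = n0" using rm by simp
    then show "(i < j \<and> 0 \<le> (\<Sum>l\<in>{i..<j}. x l) \<and> (\<forall>n. i < n \<and> n < j \<longrightarrow> (\<Sum>l\<in>{i..<n}. x l) < 0))
    \<or> (j = i \<and> \<not> (\<exists>n>i. 0 \<le> (\<Sum>l\<in>{i..<n}. x l)))"
    proof -
      have mm: "(\<Sum>l\<in>{i..<n}. x l) < 0" if "i < n" "n < n0" for n
        using min[of n] that by (force simp: Q_def)
      show ?thesis using Q0 mm \<open>j = n0\<close> by (simp add: Q_def)
    qed
  next
    assume "(i < j \<and> 0 \<le> (\<Sum>l\<in>{i..<j}. x l) \<and> (\<forall>n. i < n \<and> n < j \<longrightarrow> (\<Sum>l\<in>{i..<n}. x l) < 0))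
    \<or> (j = i \<and> \<not> (\<exists>n>i. 0 \<le> (\<Sum>l\<in>{i..<n}. x l)))"
    then have j: "Q j" "\<And>n. i < n \<Longrightarrow> n < j \<Longrightarrow> \<not> Q n" using True by (auto simp: Q_def)
    have "\<not> n0 < j" using j(2)[of n0] Q0 by (auto simp: Q_def)
    then have "n0 \<ge> j" by simp
    moreover have "j \<ge> n0" using min j by auto
    ultimately show "record_map x i = j" using rm by simp
  qed
next
  case False
  then show ?thesis unfolding record_map_def by auto
qed

lemma rm_gt:
  assumes "record_map x i \<noteq> i"
  shows "i < record_map x i" "0 \<le> (\<Sum>l\<in>{i..<record_map x i}. x l)"
    "\<And>n. i < n \<Longrightarrow> n < record_map x i \<Longrightarrow> (\<Sum>l\<in>{i..<n}. x l) < 0"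
  using rm_char[of x i "record_map x i"] assms by auto

lemma rm_ex:
  assumes "0 \<le> (\<Sum>l\<in>{i..<n}. x l)" "i < n"
  shows "record_map x i \<noteq> i" "record_map x i \<le> n"
proof -
  show ne: "record_map x i \<noteq> i" using rm_char[of x i i] assms by auto
  show "record_map x i \<le> n"
  proof (rule ccontr)
    assume "\<not> ?thesis"
    then show False using rm_gt(3)[OF ne, of n] assms by auto
  qed
qed

lemma sum_split_int:
  fixes x :: "int \<Rightarrow> int"
  assumes "i \<le> j" "j \<le> n"
  shows "(\<Sum>l\<in>{i..<n}. x l) = (\<Sum>l\<in>{i..<j}. x l) + (\<Sum>l\<in>{j..<n}. x l)"
proof -
  have "{i..<n} = {i..<j} \<union> {j..<n}" using assms by auto
  then show ?thesis by (simp add: sum.union_disjoint[symmetric] ivl_disj_int)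
qed

lemma rm_nest:
  assumes "record_map x i \<noteq> i" "i < j" "j < record_map x i"
  shows "record_map x j \<noteq> j" "record_map x j \<le> record_map x i"
proof -
  have a: "0 \<le> (\<Sum>l\<in>{i..<record_map x i}. x l)" "(\<Sum>l\<in>{i..<j}. x l) < 0"
    using rm_gt[OF assms(1)] assms by auto
  have "0 \<le> (\<Sum>l\<in>{j..<record_map x i}. x l)"
    using a sum_split_int[of i j "record_map x i" x] assms by simp
  then show "record_map x j \<noteq> j" "record_map x j \<le> record_map x i"
    using rm_ex[of x j "record_map x i"] assms by auto
qed

definition UU :: "(int \<Rightarrow> int) \<Rightarrow> (int \<times> int) set" where
  "UU x = record_edges x \<union> (record_edges x)\<inverse>"

lemma edge_iff: "(i, j) \<in> record_edges x \<longleftrightarrow> record_map x i = j \<and> j \<noteq> i"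
  unfolding record_edges_def by auto

lemma UU_sym: "(a, b) \<in> (UU x)\<^sup>* \<Longrightarrow> (b, a) \<in> (UU x)\<^sup>*"
proof -
  assume "(a, b) \<in> (UU x)\<^sup>*"
  then have "(b, a) \<in> ((UU x)\<inverse>)\<^sup>*" by (simp add: rtrancl_converse)
  moreover have "(UU x)\<inverse> = UU x" unfolding UU_def by auto
  ultimately show ?thesis by simp
qed

lemma chain_up:
  assumes "record_map x i \<noteq> i" "i < c" "c \<le> record_map x i"
  shows "(c, record_map x i) \<in> (UU x)\<^sup>*"
  using assms
proof (induction "nat (record_map x i - c)" arbitrary: c rule: less_induct)
  case less
  show ?case
  proof (cases "c = record_map x i")
    case True then show ?thesis by simp
  next
    case False
    then have lt: "c < record_map x i" using less by auto
    from rm_nest[OF less.prems(1) less.prems(2) lt]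
    have n: "record_map x c \<noteq> c" "record_map x c \<le> record_map x i" .
    have gt: "c < record_map x c" using rm_gt(1)[OF n(1)] .
    have "(c, record_map x c) \<in> record_edges x" using n(1) edge_iff by blast
    then have e: "(c, record_map x c) \<in> UU x" unfolding UU_def by blast
    have "(record_map x c, record_map x i) \<in> (UU x)\<^sup>*"
      using less.hyps[of "record_map x c"] gt n less.prems by auto
    then show ?thesis using e by (meson converse_rtrancl_into_rtrancl)
  qed
qed

lemma interval_aux:
  assumes "(a, b) \<in> (UU x)\<^sup>*"
  shows "a < c \<Longrightarrow> c \<le> b \<Longrightarrow> (a, c) \<in> (UU x)\<^sup>*"
  using assms
proof (induction arbitrary: c rule: rtrancl_induct)
  case base then show ?case by simp
next
  case (step y z)
  show ?case
  proof (cases "c \<le> y")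
    case True
    then show ?thesis using step by auto
  next
    case False
    then have yc: "y < c" "c \<le> z" using step by auto
    have "(y, z) \<in> record_edges x"
    proof (rule ccontr)
      assume "(y, z) \<notin> record_edges x"
      then have "(z, y) \<in> record_edges x" using step.hyps(2) unfolding UU_def by blast
      then have "y = record_map x z" "record_map x z \<noteq> z" by (auto simp: edge_iff)
      then show False using rm_gt(1)[of x z] yc by auto
    qed
    then have z: "z = record_map x y" "record_map x y \<noteq> y" by (auto simp: edge_iff)
    have "(c, z) \<in> (UU x)\<^sup>*" using chain_up[OF z(2)] yc z by simp
    then have "(z, c) \<in> (UU x)\<^sup>*" by (rule UU_sym)
    with step.hyps step(1) show ?thesis by (meson rtrancl.rtrancl_into_rtrancl rtrancl_trans)
  qed
qed

lemma comp_alt: "record_component x n = {m. (n, m) \<in> (UU x)\<^sup>*}"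
  unfolding record_component_def UU_def by simp

lemma comp_self: "n \<in> record_component x n"
  by (simp add: comp_alt)

lemma comp_eq: "m \<in> record_component x n \<Longrightarrow> record_component x m = record_component x n"
  unfolding comp_alt by (auto intro: rtrancl_trans dest: UU_sym)

lemma comp_interval:
  assumes "a \<in> record_component x n" "b \<in> record_component x n" "a \<le> c" "c \<le> b"
  shows "c \<in> record_component x n"
proof (cases "a = c")
  case True then show ?thesis using assms by simp
next
  case False
  have "(a, b) \<in> (UU x)\<^sup>*" using assms unfolding comp_alt by (auto intro: rtrancl_trans dest: UU_sym)
  then have "(a, c) \<in> (UU x)\<^sup>*" using interval_aux False assms by auto
  then show ?thesis using assms(1) unfolding comp_alt by (auto intro: rtrancl_trans)
qed


lemma sum_shift: "(\<Sum>l\<in>{i..<n}. x (l+k)) = (\<Sum>l\<in>{i+k..<n+k::int}. (x l :: int))"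
  by (rule sum.reindex_bij_witness[of _ "\<lambda>l. l - k" "\<lambda>l. l + k"]) auto

lemma rm_shift: "record_map (\<lambda>n. x (n+k)) i = record_map x (i+k) - k"
proof -
  define j where "j = record_map x (i+k) - k"
  have "record_map x (i+k) = j + k" by (simp add: j_def)
  then have c: "(i+k < j+k \<and> 0 \<le> (\<Sum>l\<in>{i+k..<j+k}. x l) \<and> (\<forall>n. i+k < n \<and> n < j+k \<longrightarrow> (\<Sum>l\<in>{i+k..<n}. x l) < 0))
    \<or> (j+k = i+k \<and> \<not> (\<exists>n>i+k. 0 \<le> (\<Sum>l\<in>{i+k..<n}. x l)))" by (simp only: rm_char)
  have "(i < j \<and> 0 \<le> (\<Sum>l\<in>{i..<j}. x (l+k)) \<and> (\<forall>n. i < n \<and> n < j \<longrightarrow> (\<Sum>l\<in>{i..<n}. x (l+k)) < 0))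
    \<or> (j = i \<and> \<not> (\<exists>n>i. 0 \<le> (\<Sum>l\<in>{i..<n}. x (l+k))))"
  proof (rule disjE[OF c])
    assume a: "i+k < j+k \<and> 0 \<le> (\<Sum>l\<in>{i+k..<j+k}. x l) \<and> (\<forall>n. i+k < n \<and> n < j+k \<longrightarrow> (\<Sum>l\<in>{i+k..<n}. x l) < 0)"
    have "\<forall>n. i < n \<and> n < j \<longrightarrow> (\<Sum>l\<in>{i..<n}. x (l+k)) < 0"
    proof (intro allI impI)
      fix n assume "i < n \<and> n < j"
      then show "(\<Sum>l\<in>{i..<n}. x (l+k)) < 0" using a[THEN conjunct2, THEN conjunct2, rule_format, of "n+k"]
        by (simp add: sum_shift)
    qed
    then show ?thesis using a by (simp add: sum_shift)
  next
    assume a: "j+k = i+k \<and> \<not> (\<exists>n>i+k. 0 \<le> (\<Sum>l\<in>{i+k..<n}. x l))"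
    have "\<not> (\<exists>n>i. 0 \<le> (\<Sum>l\<in>{i..<n}. x (l+k)))"
    proof
      assume "\<exists>n>i. 0 \<le> (\<Sum>l\<in>{i..<n}. x (l+k))"
      then obtain n where "n > i" "0 \<le> (\<Sum>l\<in>{i..<n}. x (l+k))" by auto
      then show False using a by (auto simp: sum_shift)
    qed
    then show ?thesis using a by simp
  qed
  then have "record_map (\<lambda>n. x (n+k)) i = j" by (simp only: rm_char)
  then show ?thesis by (simp add: j_def)
qed

lemma UU_shift: "(i, j) \<in> UU (\<lambda>n. x (n+k)) \<longleftrightarrow> (i+k, j+k) \<in> UU x"
  unfolding UU_def by (auto simp: edge_iff rm_shift)

lemma rt_shift1: "(a, b) \<in> (UU (\<lambda>n. x (n+k)))\<^sup>* \<Longrightarrow> (a+k, b+k) \<in> (UU x)\<^sup>*"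
proof (induction rule: rtrancl_induct)
  case (step y z)
  have "(y+k, z+k) \<in> UU x" using step.hyps(2) by (simp add: UU_shift)
  then show ?case using step.IH by (meson rtrancl.rtrancl_into_rtrancl)
qed simp

lemma rt_shift2: "(a, b) \<in> (UU x)\<^sup>* \<Longrightarrow> (a-k, b-k) \<in> (UU (\<lambda>n. x (n+k)))\<^sup>*"
proof (induction rule: rtrancl_induct)
  case (step y z)
  have "(y-k, z-k) \<in> UU (\<lambda>n. x (n+k))" using step.hyps(2) by (simp add: UU_shift)
  then show ?case using step.IH by (meson rtrancl.rtrancl_into_rtrancl)
qed simp

lemma comp_shift: "m \<in> record_component (\<lambda>n. x (n+k)) n \<longleftrightarrow> m + k \<in> record_component x (n+k)"
  unfolding comp_alt using rt_shift1[of n m x k] rt_shift2[of "n+k" "m+k" x k] by auto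

lemma comp_shift_img: "record_component (\<lambda>n. x (n+k)) n = (\<lambda>m. m - k) ` record_component x (n+k)"
proof -
  have "m \<in> record_component (\<lambda>n. x (n+k)) n \<longleftrightarrow> m \<in> (\<lambda>m. m - k) ` record_component x (n+k)" for m
    unfolding comp_shift by (auto simp: image_iff intro: bexI[of _ "m+k"])
  then show ?thesis by blast
qed

definition Eup :: "(int \<Rightarrow> int) \<Rightarrow> int \<Rightarrow> bool" where
  "Eup x m = (infinite (record_component x m) \<and> (\<forall>j\<in>record_component x m. m \<le> j))"
definition Edn :: "(int \<Rightarrow> int) \<Rightarrow> int \<Rightarrow> bool" where
  "Edn x m = (infinite (record_component x m) \<and> (\<forall>j\<in>record_component x m. j \<le> m))"

lemma fin_shift: "finite (record_component (\<lambda>n. x (n+k)) n) \<longleftrightarrow> finite (record_component x (n+k))"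
  unfolding comp_shift_img by (rule finite_image_iff) (simp add: inj_on_def)

lemma Eup_shift: "Eup (\<lambda>n. x (n+k)) 0 \<longleftrightarrow> Eup x k"
  unfolding Eup_def fin_shift by (simp add: comp_shift_img)

lemma Edn_shift: "Edn (\<lambda>n. x (n+k)) 0 \<longleftrightarrow> Edn x k"
  unfolding Edn_def fin_shift by (simp add: comp_shift_img)

lemma least_int_in:
  fixes C :: "int set"
  assumes "c \<in> C" "\<forall>j\<in>C. b \<le> j"
  shows "\<exists>m\<in>C. \<forall>j\<in>C. m \<le> j"
proof -
  have "\<exists>d::nat. b + int d \<in> C" using assms by (intro exI[of _ "nat (c - b)"]) auto
  then obtain d where d: "b + int d \<in> C" "\<And>e. e < d \<Longrightarrow> b + int e \<notin> C"
    using exists_least_iff[of "\<lambda>d. b + int d \<in> C"] by blast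
  have "b + int d \<le> j" if "j \<in> C" for j
  proof (rule ccontr)
    assume "\<not> ?thesis"
    then have "nat (j - b) < d" using assms that by auto
    from d(2)[OF this] that assms show False by auto
  qed
  then show ?thesis using d(1) by blast
qed

lemma greatest_int_in:
  fixes C :: "int set"
  assumes "c \<in> C" "\<forall>j\<in>C. j \<le> b"
  shows "\<exists>m\<in>C. \<forall>j\<in>C. j \<le> m"
proof -
  have "\<exists>m\<in>uminus ` C. \<forall>j\<in>uminus ` C. m \<le> j"
    by (rule least_int_in[of "-c" _ "-b"]) (use assms in auto)
  then show ?thesis by force
qed

lemma key:
  assumes "infinite (record_component x n)"
  shows "(\<exists>m. Eup x m) \<or> (\<exists>m. Edn x m) \<or> (\<forall>k. k \<in> record_component x n)"
proof -
  let ?C = "record_component x n"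
  have nC: "n \<in> ?C" by (rule comp_self)
  show ?thesis
  proof (cases "\<exists>b. \<forall>j\<in>?C. b \<le> j")
    case True
    then obtain b where "\<forall>j\<in>?C. b \<le> j" by blast
    then obtain m where m: "m \<in> ?C" "\<forall>j\<in>?C. m \<le> j" using least_int_in[OF nC] by blast
    have "record_component x m = ?C" using comp_eq[OF m(1)] .
    then have "Eup x m" using m assms by (simp add: Eup_def)
    then show ?thesis by blast
  next
    case F1: False
    show ?thesis
    proof (cases "\<exists>b. \<forall>j\<in>?C. j \<le> b")
      case True
      then obtain b where "\<forall>j\<in>?C. j \<le> b" by blast
      then obtain m where m: "m \<in> ?C" "\<forall>j\<in>?C. j \<le> m" using greatest_int_in[OF nC] by blast
      have "record_component x m = ?C" using comp_eq[OF m(1)] .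
      then have "Edn x m" using m assms by (simp add: Edn_def)
      then show ?thesis by blast
    next
      case False
      have "k \<in> ?C" for k
      proof -
        obtain a where "a \<in> ?C" "a < k" using F1 by (meson not_le)
        moreover obtain b where "b \<in> ?C" "k < b" using False by (meson not_le)
        ultimately show ?thesis using comp_interval[of a x n b k] by auto
      qed
      then show ?thesis by blast
    qed
  qed
qed

lemma Eup_unique: assumes "Eup x m" "Eup x m'" shows "m = m'"
proof (rule ccontr)
  assume ne: "m \<noteq> m'"
  have "\<exists>p q. Eup x p \<and> Eup x q \<and> p < q" using assms ne by (metis linorder_neqE)
  then obtain p q where pq: "Eup x p" "Eup x q" "p < q" by blast
  have "\<exists>b\<in>record_component x p. q \<le> b"
  proof (rule ccontr)
    assume "\<not> ?thesis"
    then have "record_component x p \<subseteq> {p..<q}" using pq(1) by (force simp: Eup_def)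
    then show False using pq(1) by (auto simp: Eup_def dest: finite_subset)
  qed
  then obtain b where "b \<in> record_component x p" "q \<le> b" by blast
  then have "q \<in> record_component x p" using comp_interval[of p x p b q] comp_self pq by auto
  then have "record_component x q = record_component x p" by (rule comp_eq)
  then have "p \<in> record_component x q" using comp_self by auto
  then show False using pq by (auto simp: Eup_def)
qed

lemma Edn_unique: assumes "Edn x m" "Edn x m'" shows "m = m'"
proof (rule ccontr)
  assume ne: "m \<noteq> m'"
  have "\<exists>p q. Edn x p \<and> Edn x q \<and> p < q" using assms ne by (metis linorder_neqE)
  then obtain p q where pq: "Edn x p" "Edn x q" "p < q" by blast
  have "\<exists>b\<in>record_component x q. b \<le> p"
  proof (rule ccontr)
    assume "\<not> ?thesis"
    then have "record_component x q \<subseteq> {p<..q}" using pq(2) by (force simp: Edn_def)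
    then show False using pq(2) by (auto simp: Edn_def dest: finite_subset)
  qed
  then obtain b where "b \<in> record_component x q" "b \<le> p" by blast
  then have "p \<in> record_component x q" using comp_interval[of b x q q p] comp_self pq by auto
  then have "record_component x p = record_component x q" by (rule comp_eq)
  then have "q \<in> record_component x p" using comp_self by auto
  then show False using pq by (auto simp: Edn_def)
qed

definition Bad :: "(int \<Rightarrow> int) \<Rightarrow> bool" where
  "Bad x = ((\<exists>m. Eup x m) \<or> (\<exists>m. Edn x m))"

lemma good_iff:
  assumes "\<not> Bad x"
  shows "finite (record_component x 0) \<longleftrightarrow> (\<forall>n. finite (record_component x n))"
    "(\<forall>n\<ge>1. finite (record_component x n)) \<longleftrightarrow> (\<forall>n. finite (record_component x n))"
    "(\<forall>n\<le>-1. finite (record_component x n)) \<longleftrightarrow> (\<forall>n. finite (record_component x n))"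
proof -
  have *: "finite (record_component x p)" if "finite (record_component x q)" for p q
  proof (rule ccontr)
    assume "infinite (record_component x p)"
    then have "\<forall>k. k \<in> record_component x p" using key assms by (auto simp: Bad_def)
    then have "record_component x q = record_component x p" using comp_eq by blast
    then show False using that \<open>infinite (record_component x p)\<close> by simp
  qed
  show "finite (record_component x 0) \<longleftrightarrow> (\<forall>n. finite (record_component x n))" using * by blast
  show "(\<forall>n\<ge>1. finite (record_component x n)) \<longleftrightarrow> (\<forall>n. finite (record_component x n))"
    using *[of 1] by auto
  show "(\<forall>n\<le>-1. finite (record_component x n)) \<longleftrightarrow> (\<forall>n. finite (record_component x n))"
    using *[of "-1"] by auto
qed


abbreviation "SS \<equiv> PiM (UNIV::int set) (\<lambda>_. count_space (UNIV::int set))"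

lemma sum_meas: "(\<lambda>x. \<Sum>l\<in>J. x l) \<in> SS \<rightarrow>\<^sub>M count_space (UNIV::int set)"
proof (induction J rule: infinite_finite_induct)
  case (insert a F)
  show ?case using insert.hyps 
    apply simp
    apply (rule measurable_compose_countable[where g="\<lambda>x. x a" and f="\<lambda>v x. v + (\<Sum>l\<in>F. x l)"])
    apply (rule measurable_compose[OF insert.IH]) 
    by auto
qed auto

lemma pred_sum[measurable]: "Measurable.pred SS (\<lambda>x. 0 \<le> (\<Sum>l\<in>{(i::int)..<n}. x l))"
proof -
  have "{x\<in>space SS. 0 \<le> (\<Sum>l\<in>{i..<n}. x l)} = (\<lambda>x. \<Sum>l\<in>{i..<n}. x l) -` {v. 0 \<le> v} \<inter> space SS"
    by auto
  then show ?thesis unfolding pred_def using measurable_sets[OF sum_meas, of "{v. 0 \<le> v}"] by simp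
qed

lemma pred_sum2[measurable]: "Measurable.pred SS (\<lambda>x. (\<Sum>l\<in>{(i::int)..<n}. x l) < 0)"
  unfolding not_le[symmetric] by measurable

lemma pred_rm[measurable]: "Measurable.pred SS (\<lambda>x. record_map x i = j)"
  unfolding rm_char by measurable

lemma pred_UU[measurable]: "Measurable.pred SS (\<lambda>x. (i, j) \<in> UU x)"
proof -
  have "(i, j) \<in> UU x \<longleftrightarrow> (record_map x i = j \<and> j \<noteq> i) \<or> (record_map x j = i \<and> i \<noteq> j)" for x
    unfolding UU_def by (auto simp: edge_iff)
  then show ?thesis by (simp only:) measurable
qed

lemma pred_pow: "Measurable.pred SS (\<lambda>x. (i, j) \<in> (UU x) ^^ k)"
proof (induction k arbitrary: j)
  case 0
  then show ?case by simp measurable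
next
  case (Suc k)
  have "(i, j) \<in> (UU x) ^^ Suc k \<longleftrightarrow> (\<exists>z. (i, z) \<in> (UU x) ^^ k \<and> (z, j) \<in> UU x)" for x
    by auto
  then show ?case using Suc by (simp only:) (intro pred_intros_countable pred_intros_logic Suc pred_UU)
qed

lemma pred_rt[measurable]: "Measurable.pred SS (\<lambda>x. (i, j) \<in> (UU x)\<^sup>*)"
proof -
  have "(i, j) \<in> (UU x)\<^sup>* \<longleftrightarrow> (\<exists>k. (i, j) \<in> (UU x) ^^ k)" for x
    by (simp add: rtrancl_power)
  then show ?thesis using pred_pow by (simp only:) measurable
qed

lemma pred_fin[measurable]: "Measurable.pred SS (\<lambda>x. finite (record_component x n))"
proof -
  have "finite (record_component x n) \<longleftrightarrow> (\<exists>k. \<forall>m. (n, m) \<in> (UU x)\<^sup>* \<longrightarrow> \<bar>m\<bar> < k)" for x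
    unfolding finite_int_iff_bounded comp_alt by auto
  then show ?thesis by (simp only:) measurable
qed

lemma mem_comp: "j \<in> record_component x m \<longleftrightarrow> (m, j) \<in> (UU x)\<^sup>*"
  by (simp add: comp_alt)

lemma pred_Eup[measurable]: "Measurable.pred SS (\<lambda>x. Eup x m)"
  unfolding Eup_def Ball_def mem_comp by measurable

lemma pred_Edn[measurable]: "Measurable.pred SS (\<lambda>x. Edn x m)"
  unfolding Edn_def Ball_def mem_comp by measurable

lemma pred_Bad[measurable]: "Measurable.pred SS (\<lambda>x. Bad x)"
  unfolding Bad_def by measurable


lemma zero_lemma:
  fixes Q :: "(int \<Rightarrow> int) \<Rightarrow> int \<Rightarrow> bool"
  assumes "prob_space M"
    and meas: "\<And>k. {\<omega>\<in>space M. Q (F \<omega>) k} \<in> sets M"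
    and uniq: "\<And>x k k'. Q x k \<Longrightarrow> Q x k' \<Longrightarrow> k = k'"
    and eq: "\<And>k. measure M {\<omega>\<in>space M. Q (F \<omega>) k} = measure M {\<omega>\<in>space M. Q (F \<omega>) 0}"
  shows "AE \<omega> in M. \<forall>k. \<not> Q (F \<omega>) k"
proof -
  interpret prob_space M by fact
  define A where "A i = {\<omega>\<in>space M. Q (F \<omega>) (int i)}" for i
  define p where "p = measure M {\<omega>\<in>space M. Q (F \<omega>) 0}"
  have "range A \<subseteq> sets M" using meas by (auto simp: A_def)
  moreover have "disjoint_family A"
    unfolding disjoint_family_on_def A_def using uniq by fastforce
  ultimately have "(\<lambda>i. measure M (A i)) sums (measure M (\<Union>i. A i))"
    by (rule finite_measure_UNION)
  moreover have "measure M (A i) = p" for i using eq by (simp add: A_def p_def)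
  ultimately have "(\<lambda>i. p) sums (measure M (\<Union>i. A i))" by simp
  then have "(\<lambda>i::nat. p) \<longlonglongrightarrow> 0" by (intro summable_LIMSEQ_zero sums_summable)
  then have p0: "p = 0" by (simp add: LIMSEQ_const_iff)
  have "AE \<omega> in M. \<not> Q (F \<omega>) k" for k
  proof (rule AE_I')
    show "{\<omega>\<in>space M. Q (F \<omega>) k} \<in> null_sets M"
      using meas[of k] eq[of k] p0 by (auto simp: p_def emeasure_eq_measure)
  qed auto
  then show ?thesis by (simp add: AE_all_countable)
qed

theorem lemma3p3:
  fixes M :: "'a measure" and X :: "int \<Rightarrow> 'a \<Rightarrow> int"
  assumes "prob_space M"
    and "stationary_int_process M X"
  shows "measure M {\<omega> \<in> space M. finite (record_component (\<lambda>n. X n \<omega>) 0)}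
           = measure M {\<omega> \<in> space M. \<forall>n\<ge>1. finite (record_component (\<lambda>k. X k \<omega>) n)}
       \<and> measure M {\<omega> \<in> space M. \<forall>n\<ge>1. finite (record_component (\<lambda>k. X k \<omega>) n)}
           = measure M {\<omega> \<in> space M. \<forall>n\<le>-1. finite (record_component (\<lambda>k. X k \<omega>) n)}"
proof -
  interpret prob_space M by fact
  have Xm: "\<And>n. X n \<in> M \<rightarrow>\<^sub>M count_space UNIV"
    and st: "\<And>k. distr M SS (\<lambda>\<omega> n. X (n + k) \<omega>) = distr M SS (\<lambda>\<omega> n. X n \<omega>)"
    using assms(2) unfolding stationary_int_process_def by auto
  have fm: "(\<lambda>\<omega> n. X (n + k) \<omega>) \<in> M \<rightarrow>\<^sub>M SS" for k
    by (rule measurable_PiM_single') (auto simp: Xm)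
  have f0: "(\<lambda>\<omega> n. X n \<omega>) \<in> M \<rightarrow>\<^sub>M SS" using fm[of 0] by simp
  have ev: "{\<omega>\<in>space M. P (\<lambda>n. X n \<omega>)} \<in> sets M" if "Measurable.pred SS P" for P
    using measurable_compose[OF f0 that] unfolding pred_def .
  have shift_meas: "measure M {\<omega>\<in>space M. P (\<lambda>n. X (n + k) \<omega>)} = measure M {\<omega>\<in>space M. P (\<lambda>n. X n \<omega>)}"
    if "Measurable.pred SS P" for P k
  proof -
    have S: "{x\<in>space SS. P x} \<in> sets SS" using that unfolding pred_def .
    have "measure M {\<omega>\<in>space M. P (\<lambda>n. X (n + k) \<omega>)} = measure (distr M SS (\<lambda>\<omega> n. X (n + k) \<omega>)) {x\<in>space SS. P x}"
      by (subst measure_distr[OF fm S]) (auto intro!: arg_cong[where f="measure M"] measurable_space[OF fm])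
    also have "\<dots> = measure (distr M SS (\<lambda>\<omega> n. X n \<omega>)) {x\<in>space SS. P x}" by (simp only: st)
    also have "\<dots> = measure M {\<omega>\<in>space M. P (\<lambda>n. X n \<omega>)}"
      by (subst measure_distr[OF f0 S]) (auto intro!: arg_cong[where f="measure M"] measurable_space[OF f0])
    finally show ?thesis .
  qed
  have AEup: "AE \<omega> in M. \<forall>k. \<not> Eup (\<lambda>n. X n \<omega>) k"
  proof (rule zero_lemma[OF assms(1)])
    show "{\<omega>\<in>space M. Eup (\<lambda>n. X n \<omega>) k} \<in> sets M" for k by (rule ev) measurable
    show "k = k'" if "Eup x k" "Eup x k'" for x k k' using Eup_unique that .
    show "measure M {\<omega>\<in>space M. Eup (\<lambda>n. X n \<omega>) k} = measure M {\<omega>\<in>space M. Eup (\<lambda>n. X n \<omega>) 0}" for k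
      using shift_meas[of "\<lambda>x. Eup x 0" k] Eup_shift[of "\<lambda>n. X n _" k] by simp
  qed
  have AEdn: "AE \<omega> in M. \<forall>k. \<not> Edn (\<lambda>n. X n \<omega>) k"
  proof (rule zero_lemma[OF assms(1)])
    show "{\<omega>\<in>space M. Edn (\<lambda>n. X n \<omega>) k} \<in> sets M" for k by (rule ev) measurable
    show "k = k'" if "Edn x k" "Edn x k'" for x k k' using Edn_unique that .
    show "measure M {\<omega>\<in>space M. Edn (\<lambda>n. X n \<omega>) k} = measure M {\<omega>\<in>space M. Edn (\<lambda>n. X n \<omega>) 0}" for k
      using shift_meas[of "\<lambda>x. Edn x 0" k] Edn_shift[of "\<lambda>n. X n _" k] by simp
  qed
  have AEg: "AE \<omega> in M. \<not> Bad (\<lambda>n. X n \<omega>)"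
    using AEup AEdn by eventually_elim (auto simp: Bad_def)
  define G where "G = {\<omega>\<in>space M. \<forall>n. finite (record_component (\<lambda>k. X k \<omega>) n)}"
  have G: "G \<in> sets M" unfolding G_def by (rule ev) measurable
  have 1: "measure M {\<omega> \<in> space M. finite (record_component (\<lambda>n. X n \<omega>) 0)} = measure M G"
  proof (rule measure_eq_AE)
    show "AE x in M. (x \<in> {\<omega> \<in> space M. finite (record_component (\<lambda>n. X n \<omega>) 0)}) = (x \<in> G)"
      using AEg by eventually_elim (simp add: G_def good_iff)
  qed (rule ev, measurable, rule G)
  have 2: "measure M {\<omega> \<in> space M. \<forall>n\<ge>1. finite (record_component (\<lambda>k. X k \<omega>) n)} = measure M G"
  proof (rule measure_eq_AE)
    show "AE x in M. (x \<in> {\<omega> \<in> space M. \<forall>n\<ge>1. finite (record_component (\<lambda>k. X k \<omega>) n)}) = (x \<in> G)"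
      using AEg by eventually_elim (simp add: G_def good_iff)
  qed (rule ev, measurable, rule G)
  have 3: "measure M {\<omega> \<in> space M. \<forall>n\<le>-1. finite (record_component (\<lambda>k. X k \<omega>) n)} = measure M G"
  proof (rule measure_eq_AE)
    show "AE x in M. (x \<in> {\<omega> \<in> space M. \<forall>n\<le>-1. finite (record_component (\<lambda>k. X k \<omega>) n)}) = (x \<in> G)"
      using AEg by eventually_elim (simp add: G_def good_iff)
  qed (rule ev, measurable, rule G)
  show ?thesis using 1 2 3 by simp
qed

end
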